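(* For every integer $d\ge1$ there exists a well-typed CorePolyC program $p$ with one input, whose program text has length $O(d\log d)$, such that $\mathrm{sz}([\![p]\!](v))=d\cdot\mathrm{sz}(v)^d$ for every $v\in\mathbb Z$.
   Context: CorePolyC. Types are $\mathtt{iint},\mathtt{int},\mathtt{bool}$; $\mathsf{Int}=\{\mathtt{iint},\mathtt{int}\}$, ordered by $\mathtt{iint}\preccurlyeq\mathtt{int}$. Values are unbounded integers ($\mathbb Z$) and booleans $\#t,\#f$. Expressions: variables $x$; constants (nonempty decimal digit strings denoting natural numbers; $\mathtt{true}$, $\mathtt{false}$); operator applications $\mathtt{op}(e_1,\dots,e_m)$; parenthesized $(e)$. Operators and semantics: unary $-$ (negation); binary $+,-,/,\%$ (integer addition, subtraction, division, remainder, with division and remainder by $0$ returning $0$); $\mathtt{size}$, with $\mathtt{size}(v)=\lceil\log_2(\mathrm{abs}(v)+1)\rceil$; comparisons $\texttt{>=},\texttt{<=},\texttt{>},\texttt{<},\texttt{==},\texttt{!=}$ on integers returning booleans; boolean $\texttt{!},\texttt{\&\&},\texttt{||}$. Statements: declaration $t\ x;$; assignment $x=e;$; block $\{s_1\dots s_m\}$; conditional $\mathbf{if}(e)\ s_1\ \mathbf{else}\ s_2$; loop $\mathbf{for}(x<\mathtt{size}(e))\ s$ (loop bounds are always syntactically of the form $\mathtt{size}(e)$). A program is $\mathbf{int\ main}(\mathbf{int}\ x_1,\dots,\mathbf{int}\ x_m)\{s_1\dots s_k\ \mathbf{return}\ e;\}$. Semantics (big-step). A store $\Sigma$ is a finite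 partial map from variables to values; $\Sigma[x\mapsto v]$ is the update. $\Sigma\vdash e\Downarrow v$: a variable $x\in\mathrm{dom}\,\Sigma$ evaluates to $\Sigma(x)$, constants to their value, $\mathtt{op}(e_1,\dots,e_m)$ to $\mathtt{op}$ applied to the values of the $e_i$. $\Sigma\vdash s\Downarrow\Sigma'$: $t\ x;$ gives $\Sigma[x\mapsto 0]$ if $t\in\mathsf{Int}$ and $\Sigma[x\mapsto\#f]$ if $t=\mathtt{bool}$; $x=e;$ (with $x\in\mathrm{dom}\,\Sigma$) gives $\Sigma[x\mapsto v]$ where $\Sigma\vdash e\Downarrow v$; a sequence or block executes its statements in order threading the store (a block returns the final store); a conditional evaluates its guard to a boolean and executes the corresponding branch; $\mathbf{for}(x<e)\ s$ evaluates $e$ once to an integer $i$, sets $\Sigma_0=\Sigma$, executes $s$ from $\Sigma_j[x\mapsto j]$ obtaining $\Sigma_{j+1}$ for $j=0,\dots,i-1$, and ends in $\Sigma_i$ (i.e. in $\Sigma$ if $i\le 0$). A program on inputs $v_1,\dots,v_m$ runs its statements from the store $[x_1\mapsto v_1,\dots,x_m\mapsto v_m]$ and outputs the value of its return expression in the resulting store. Type system. A typing environment $\Gamma$ is a finite partial map from variables to types; $\ell\in\{\#t,\#f\}$ is the loop indicator. Expression typing $\Gamma,\ell\vdash e:t$: a variable $x\in\mathrm{dom}\,\Gamma$ has type $\Gamma(x)$; digit literals have type $\mathtt{iint}$, $\mathtt{true},\mathtt{false}$ have type $\mathtt{bool}$; $\texttt{!},\texttt{\&\&},\texttt{||}$ take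 $\mathtt{bool}$ arguments to $\mathtt{bool}$; comparisons take arguments with types in $\mathsf{Int}$ to $\mathtt{bool}$; $+,-,/,\%$ take arguments with types in $\mathsf{Int}$ to their supremum under $\preccurlyeq$ ($\mathtt{iint}$ iff all arguments are $\mathtt{iint}$); $\mathtt{size}$ takes only an $\mathtt{iint}$ argument, giving $\mathtt{iint}$; parentheses preserve types. Statement typing $\Gamma,\ell\vdash s:\Gamma'$: $t\ x;$ is typable iff $x\notin\mathrm{dom}\,\Gamma$ and not($\ell=\#t$ and $t=\mathtt{iint}$), giving $\Gamma[x\mapsto t]$; $x=e;$ is typable iff $x\in\mathrm{dom}\,\Gamma$, not($\ell=\#t$ and $\Gamma(x)=\mathtt{iint}$), and $\Gamma,\ell\vdash e:t$ with $t,\Gamma(x)$ both in $\mathsf{Int}$ or both $\mathtt{bool}$, giving $\Gamma$; a sequence $s_1\dots s_m$ threads $\Gamma_0=\Gamma$, $\Gamma_{i-1},\ell\vdash s_i:\Gamma_i$, giving $\Gamma_m$; a block $\{\tilde s\}$ is typable if its sequence is, giving $\Gamma$; a conditional needs a guard of type $\mathtt{bool}$ and both branches typable under $\Gamma,\ell$, giving $\Gamma$; $\mathbf{for}(x<e)\ s$ needs $\Gamma,\ell\vdash e:\mathtt{iint}$, $x\notin\mathrm{dom}\,\Gamma$, and $\Gamma[x\mapsto\mathtt{iint}],\#t\vdash s:\Gamma'$ for some $\Gamma'$, giving $\Gamma$. A program is well-typed if its statements are typable starting from $[x_1\mapsto\mathtt{int},\dots,x_m\mapsto\mathtt{int}]$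 with $\ell=\#f$, ending in some $\Gamma'$, and its return expression has a type in $\mathsf{Int}$ under $\Gamma',\#f$. A well-typed program $p$ with one input computes a total function $[\![p]\!]:\mathbb Z\to\mathbb Z$. $\mathrm{sz}(v)=\lceil\log_2(\mathrm{abs}(v)+1)\rceil$ for $v\in\mathbb Z$. *)

theory Defs
  imports Complex_Main
begin

type_synonym vname = string

datatype ty = IInt | TInt | TBool

datatype oper =
    ONeg | OAdd | OSub | ODiv | OMod | OSize
  | OGe | OLe | OGt | OLt | OEq | ONe
  | ONot | OAnd | OOr

datatype expr =
    Var vname
  | NumC nat            \<comment> \<open>nonempty decimal digit string denoting a natural number\<close>
  | TrueC
  | FalseC
  | Op oper "expr list"
  | Paren expr

datatype stmt =
    Decl ty vname
  | Assign vname expr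
  | Block "stmt list"
  | If expr stmt stmt
  | For vname expr stmt   \<comment> \<open>For x e s  stands for  for(x < size(e)) s\<close>

datatype prog = Prog "vname list" "stmt list" expr
  \<comment> \<open>int main(int x1,...,int xm){ s1 ... sk return e; }\<close>

datatype val = IntV int | BoolV bool

definition sz :: "int \<Rightarrow> nat" where
  "sz v = nat \<lceil>log 2 (real_of_int \<bar>v\<bar> + 1)\<rceil>"

text \<open>Integer division / remainder (C convention: truncation toward zero), 0 when dividing by 0.\<close>
definition tdiv :: "int \<Rightarrow> int \<Rightarrow> int" where
  "tdiv a b = (if b = 0 then 0 else sgn a * sgn b * (\<bar>a\<bar> div \<bar>b\<bar>))"

definition tmod :: "int \<Rightarrow> int \<Rightarrow> int" where
  "tmod a b = (if b = 0 then 0 else a - b * tdiv a b)"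

definition int1 :: "(int \<Rightarrow> val) \<Rightarrow> val list \<Rightarrow> val option" where
  "int1 f vs = (case vs of [IntV a] \<Rightarrow> Some (f a) | _ \<Rightarrow> None)"

definition int2 :: "(int \<Rightarrow> int \<Rightarrow> val) \<Rightarrow> val list \<Rightarrow> val option" where
  "int2 f vs = (case vs of [IntV a, IntV b] \<Rightarrow> Some (f a b) | _ \<Rightarrow> None)"

definition bool1 :: "(bool \<Rightarrow> bool) \<Rightarrow> val list \<Rightarrow> val option" where
  "bool1 f vs = (case vs of [BoolV a] \<Rightarrow> Some (BoolV (f a)) | _ \<Rightarrow> None)"

definition bool2 :: "(bool \<Rightarrow> bool \<Rightarrow> bool) \<Rightarrow> val list \<Rightarrow> val option" where
  "bool2 f vs = (case vs of [BoolV a, BoolV b] \<Rightarrow> Some (BoolV (f a b)) | _ \<Rightarrow> None)"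

primrec apply_op :: "oper \<Rightarrow> val list \<Rightarrow> val option" where
  "apply_op ONeg = int1 (\<lambda>a. IntV (- a))"
| "apply_op OAdd = int2 (\<lambda>a b. IntV (a + b))"
| "apply_op OSub = int2 (\<lambda>a b. IntV (a - b))"
| "apply_op ODiv = int2 (\<lambda>a b. IntV (tdiv a b))"
| "apply_op OMod = int2 (\<lambda>a b. IntV (tmod a b))"
| "apply_op OSize = int1 (\<lambda>a. IntV (int (sz a)))"
| "apply_op OGe = int2 (\<lambda>a b. BoolV (a \<ge> b))"
| "apply_op OLe = int2 (\<lambda>a b. BoolV (a \<le> b))"
| "apply_op OGt = int2 (\<lambda>a b. BoolV (a > b))"
| "apply_op OLt = int2 (\<lambda>a b. BoolV (a < b))"
| "apply_op OEq = int2 (\<lambda>a b. BoolV (a = b))"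
| "apply_op ONe = int2 (\<lambda>a b. BoolV (a \<noteq> b))"
| "apply_op ONot = bool1 (\<lambda>a. \<not> a)"
| "apply_op OAnd = bool2 (\<lambda>a b. a \<and> b)"
| "apply_op OOr = bool2 (\<lambda>a b. a \<or> b)"

type_synonym store = "vname \<Rightarrow> val option"

fun eval :: "store \<Rightarrow> expr \<Rightarrow> val option" where
  "eval \<Sigma> (Var x) = \<Sigma> x"
| "eval \<Sigma> (NumC n) = Some (IntV (int n))"
| "eval \<Sigma> TrueC = Some (BoolV True)"
| "eval \<Sigma> FalseC = Some (BoolV False)"
| "eval \<Sigma> (Op f es) = Option.bind (those (map (eval \<Sigma>) es)) (apply_op f)"
| "eval \<Sigma> (Paren e) = eval \<Sigma> e"

definition default_val :: "ty \<Rightarrow> val" where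
  "default_val t = (if t = TBool then BoolV False else IntV 0)"

inductive
  exec  :: "store \<Rightarrow> stmt \<Rightarrow> store \<Rightarrow> bool" and
  execs :: "store \<Rightarrow> stmt list \<Rightarrow> store \<Rightarrow> bool" and
  loop  :: "vname \<Rightarrow> stmt \<Rightarrow> int \<Rightarrow> int \<Rightarrow> store \<Rightarrow> store \<Rightarrow> bool"
where
  ExDecl: "exec \<Sigma> (Decl t x) (\<Sigma>(x \<mapsto> default_val t))"
| ExAssign: "\<lbrakk> x \<in> dom \<Sigma>; eval \<Sigma> e = Some v \<rbrakk> \<Longrightarrow> exec \<Sigma> (Assign x e) (\<Sigma>(x \<mapsto> v))"
| ExBlock: "execs \<Sigma> ss \<Sigma>' \<Longrightarrow> exec \<Sigma> (Block ss) \<Sigma>'"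
| ExIfT: "\<lbrakk> eval \<Sigma> e = Some (BoolV True); exec \<Sigma> s1 \<Sigma>' \<rbrakk> \<Longrightarrow> exec \<Sigma> (If e s1 s2) \<Sigma>'"
| ExIfF: "\<lbrakk> eval \<Sigma> e = Some (BoolV False); exec \<Sigma> s2 \<Sigma>' \<rbrakk> \<Longrightarrow> exec \<Sigma> (If e s1 s2) \<Sigma>'"
| ExFor: "\<lbrakk> eval \<Sigma> (Op OSize [e]) = Some (IntV i); loop x s 0 i \<Sigma> \<Sigma>' \<rbrakk>
          \<Longrightarrow> exec \<Sigma> (For x e s) \<Sigma>'"
| ExsNil: "execs \<Sigma> [] \<Sigma>"
| ExsCons: "\<lbrakk> exec \<Sigma> s \<Sigma>1; execs \<Sigma>1 ss \<Sigma>' \<rbrakk> \<Longrightarrow> execs \<Sigma> (s # ss) \<Sigma>'"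
| LoopEnd: "i \<le> j \<Longrightarrow> loop x s j i \<Sigma> \<Sigma>"
| LoopStep: "\<lbrakk> j < i; exec (\<Sigma>(x \<mapsto> IntV j)) s \<Sigma>1; loop x s (j + 1) i \<Sigma>1 \<Sigma>' \<rbrakk>
             \<Longrightarrow> loop x s j i \<Sigma> \<Sigma>'"

fun run :: "prog \<Rightarrow> int list \<Rightarrow> int \<Rightarrow> bool" where
  "run (Prog xs ss e) vs r =
     (length vs = length xs \<and>
      (\<exists>\<Sigma>'. execs (map_of (zip xs (map IntV vs))) ss \<Sigma>' \<and> eval \<Sigma>' e = Some (IntV r)))"

type_synonym tenv = "vname \<Rightarrow> ty option"

definition is_int_ty :: "ty \<Rightarrow> bool" where
  "is_int_ty t \<longleftrightarrow> t = IInt \<or> t = TInt"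

definition ty_sup :: "ty \<Rightarrow> ty \<Rightarrow> ty" where
  "ty_sup a b = (if a = IInt \<and> b = IInt then IInt else TInt)"

definition arith_ty :: "ty list \<Rightarrow> ty option" where
  "arith_ty ts = (case ts of [a, b] \<Rightarrow> (if is_int_ty a \<and> is_int_ty b then Some (ty_sup a b) else None)
                            | _ \<Rightarrow> None)"

definition cmp_ty :: "ty list \<Rightarrow> ty option" where
  "cmp_ty ts = (case ts of [a, b] \<Rightarrow> (if is_int_ty a \<and> is_int_ty b then Some TBool else None)
                          | _ \<Rightarrow> None)"

definition bool_ty :: "ty list \<Rightarrow> ty option" where
  "bool_ty ts = (if ts = [TBool, TBool] then Some TBool else None)"

primrec ty_op :: "oper \<Rightarrow> ty list \<Rightarrow> ty option" where
  "ty_op ONeg ts = (case ts of [a] \<Rightarrow> (if is_int_ty a then Some a else None) | _ \<Rightarrow> None)"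
| "ty_op OAdd ts = arith_ty ts"
| "ty_op OSub ts = arith_ty ts"
| "ty_op ODiv ts = arith_ty ts"
| "ty_op OMod ts = arith_ty ts"
| "ty_op OSize ts = (if ts = [IInt] then Some IInt else None)"
| "ty_op OGe ts = cmp_ty ts"
| "ty_op OLe ts = cmp_ty ts"
| "ty_op OGt ts = cmp_ty ts"
| "ty_op OLt ts = cmp_ty ts"
| "ty_op OEq ts = cmp_ty ts"
| "ty_op ONe ts = cmp_ty ts"
| "ty_op ONot ts = (if ts = [TBool] then Some TBool else None)"
| "ty_op OAnd ts = bool_ty ts"
| "ty_op OOr ts = bool_ty ts"

text \<open>Expression typing; the loop indicator does not influence expression typing.\<close>
fun tyE :: "tenv \<Rightarrow> bool \<Rightarrow> expr \<Rightarrow> ty option" where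
  "tyE \<Gamma> l (Var x) = \<Gamma> x"
| "tyE \<Gamma> l (NumC n) = Some IInt"
| "tyE \<Gamma> l TrueC = Some TBool"
| "tyE \<Gamma> l FalseC = Some TBool"
| "tyE \<Gamma> l (Op f es) = Option.bind (those (map (tyE \<Gamma> l) es)) (ty_op f)"
| "tyE \<Gamma> l (Paren e) = tyE \<Gamma> l e"

definition compat :: "ty \<Rightarrow> ty \<Rightarrow> bool" where
  "compat a b \<longleftrightarrow> (is_int_ty a \<and> is_int_ty b) \<or> (a = TBool \<and> b = TBool)"

inductive
  wtS  :: "tenv \<Rightarrow> bool \<Rightarrow> stmt \<Rightarrow> tenv \<Rightarrow> bool" and
  wtSs :: "tenv \<Rightarrow> bool \<Rightarrow> stmt list \<Rightarrow> tenv \<Rightarrow> bool"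
where
  WtDecl: "\<lbrakk> x \<notin> dom \<Gamma>; \<not> (l \<and> t = IInt) \<rbrakk> \<Longrightarrow> wtS \<Gamma> l (Decl t x) (\<Gamma>(x \<mapsto> t))"
| WtAssign: "\<lbrakk> \<Gamma> x = Some tx; \<not> (l \<and> tx = IInt); tyE \<Gamma> l e = Some t; compat t tx \<rbrakk>
             \<Longrightarrow> wtS \<Gamma> l (Assign x e) \<Gamma>"
| WtBlock: "wtSs \<Gamma> l ss \<Gamma>' \<Longrightarrow> wtS \<Gamma> l (Block ss) \<Gamma>"
| WtIf: "\<lbrakk> tyE \<Gamma> l e = Some TBool; wtS \<Gamma> l s1 \<Gamma>1; wtS \<Gamma> l s2 \<Gamma>2 \<rbrakk>
         \<Longrightarrow> wtS \<Gamma> l (If e s1 s2) \<Gamma>"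
| WtFor: "\<lbrakk> tyE \<Gamma> l (Op OSize [e]) = Some IInt; x \<notin> dom \<Gamma>; wtS (\<Gamma>(x \<mapsto> IInt)) True s \<Gamma>' \<rbrakk>
          \<Longrightarrow> wtS \<Gamma> l (For x e s) \<Gamma>"
| WtsNil: "wtSs \<Gamma> l [] \<Gamma>"
| WtsCons: "\<lbrakk> wtS \<Gamma> l s \<Gamma>1; wtSs \<Gamma>1 l ss \<Gamma>' \<rbrakk> \<Longrightarrow> wtSs \<Gamma> l (s # ss) \<Gamma>'"

fun well_typed :: "prog \<Rightarrow> bool" where
  "well_typed (Prog xs ss e) =
     (distinct xs \<and>
      (\<exists>\<Gamma>' t. wtSs (map_of (map (\<lambda>x. (x, TInt)) xs)) False ss \<Gamma>' \<and>
              tyE \<Gamma>' False e = Some t \<and> is_int_ty t))"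

definition reserved_words :: "string list" where
  "reserved_words = [''iint'', ''int'', ''bool'', ''true'', ''false'', ''size'', ''if'', ''else'',
               ''for'', ''return'', ''main'']"

definition is_letter :: "char \<Rightarrow> bool" where
  "is_letter c \<longleftrightarrow> c \<in> set (''abcdefghijklmnopqrstuvwxyzABCDEFGHIJKLMNOPQRSTUVWXYZ_'')"

definition is_digit :: "char \<Rightarrow> bool" where
  "is_digit c \<longleftrightarrow> c \<in> set ''0123456789''"

definition valid_ident :: "vname \<Rightarrow> bool" where
  "valid_ident x \<longleftrightarrow> x \<noteq> [] \<and> is_letter (hd x) \<and> (\<forall>c\<in>set x. is_letter c \<or> is_digit c)
                     \<and> x \<notin> set reserved_words"

fun idents_e :: "expr \<Rightarrow> vname list" where
  "idents_e (Var x) = [x]"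
| "idents_e (Op f es) = concat (map idents_e es)"
| "idents_e (Paren e) = idents_e e"
| "idents_e _ = []"

fun idents_s :: "stmt \<Rightarrow> vname list" where
  "idents_s (Decl t x) = [x]"
| "idents_s (Assign x e) = x # idents_e e"
| "idents_s (Block ss) = concat (map idents_s ss)"
| "idents_s (If e s1 s2) = idents_e e @ idents_s s1 @ idents_s s2"
| "idents_s (For x e s) = x # idents_e e @ idents_s s"

fun idents_p :: "prog \<Rightarrow> vname list" where
  "idents_p (Prog xs ss e) = xs @ concat (map idents_s ss) @ idents_e e"

definition wf_idents :: "prog \<Rightarrow> bool" where
  "wf_idents p \<longleftrightarrow> (\<forall>x\<in>set (idents_p p). valid_ident x)"

fun dec_str :: "nat \<Rightarrow> string" where
  "dec_str n = (if n < 10 then [''0123456789'' ! n] else dec_str (n div 10) @ [''0123456789'' ! (n mod 10)])"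

fun show_ty :: "ty \<Rightarrow> string" where
  "show_ty IInt = ''iint''"
| "show_ty TInt = ''int''"
| "show_ty TBool = ''bool''"

fun show_op :: "oper \<Rightarrow> string" where
  "show_op ONeg = ''-''" | "show_op OAdd = ''+''" | "show_op OSub = ''-''"
| "show_op ODiv = ''/''" | "show_op OMod = ''%''" | "show_op OSize = ''size''"
| "show_op OGe = ''>=''" | "show_op OLe = ''<=''" | "show_op OGt = ''>''"
| "show_op OLt = ''<''" | "show_op OEq = ''==''" | "show_op ONe = ''!=''"
| "show_op ONot = ''!''" | "show_op OAnd = ''&&''" | "show_op OOr = ''||''"

definition sep_by :: "string \<Rightarrow> string list \<Rightarrow> string" where
  "sep_by s xs = concat (case xs of [] \<Rightarrow> [] | y # ys \<Rightarrow> y # map (\<lambda>z. s @ z) ys)"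

fun show_e :: "expr \<Rightarrow> string" where
  "show_e (Var x) = x"
| "show_e (NumC n) = dec_str n"
| "show_e TrueC = ''true''"
| "show_e FalseC = ''false''"
| "show_e (Op f es) = show_op f @ ''('' @ sep_by '','' (map show_e es) @ '')''"
| "show_e (Paren e) = ''('' @ show_e e @ '')''"

fun show_s :: "stmt \<Rightarrow> string" where
  "show_s (Decl t x) = show_ty t @ '' '' @ x @ '';''"
| "show_s (Assign x e) = x @ ''='' @ show_e e @ '';''"
| "show_s (Block ss) = ''{'' @ concat (map show_s ss) @ ''}''"
| "show_s (If e s1 s2) = ''if('' @ show_e e @ '')'' @ show_s s1 @ ''else '' @ show_s s2"
| "show_s (For x e s) = ''for('' @ x @ ''<size('' @ show_e e @ ''))'' @ show_s s"

fun show_p :: "prog \<Rightarrow> string" where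
  "show_p (Prog xs ss e) =
     ''int main('' @ sep_by '','' (map (\<lambda>x. ''int '' @ x) xs) @ ''){''
     @ concat (map show_s ss) @ ''return '' @ show_e e @ '';}''"

definition prog_length :: "prog \<Rightarrow> nat" where
  "prog_length p = length (show_p p)"

fun arity :: "prog \<Rightarrow> nat" where
  "arity (Prog xs ss e) = length xs"

end

theory Submission
  imports Defs
begin

declare dec_str.simps[simp del]

lemma len10: "length ''0123456789'' = 10" by simp

lemma dec_str_digits: "set (dec_str n) \<subseteq> set ''0123456789''"
proof (induction n rule: dec_str.induct)
  case (1 n)
  show ?case
  proof (cases "n < 10")
    case True
    have "''0123456789'' ! n \<in> set ''0123456789''"
      by (rule nth_mem) (simp only: len10 True)
    moreover have "set (dec_str n) = {''0123456789'' ! n}" using True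
      by (subst dec_str.simps) simp
    ultimately show ?thesis by (simp only: insert_subset empty_subsetI simp_thms)
  next
    case False
    have "''0123456789'' ! (n mod 10) \<in> set ''0123456789''"
      by (rule nth_mem) (simp only: len10 mod_less_divisor zero_less_numeral)
    moreover have "set (dec_str n) = insert (''0123456789'' ! (n mod 10)) (set (dec_str (n div 10)))"
      using False by (subst dec_str.simps) simp
    ultimately show ?thesis using 1 False by (simp only: insert_subset simp_thms)
  qed
qed

lemma dec_str_ne: "dec_str n \<noteq> []"
  by (subst dec_str.simps) auto

definition dv :: "string \<Rightarrow> nat" where
  "dv s = foldl (\<lambda>a c. 10 * a + (of_char c - 48)) 0 s"

lemma digit_val: "m < 10 \<Longrightarrow> (of_char (''0123456789'' ! m) :: nat) - 48 = m"
proof -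
  assume "m < 10"
  then have "m \<in> {0,1,2,3,4,5,6,7,8,9}" by auto
  then show ?thesis by auto
qed

lemma dv_dec: "dv (dec_str n) = n"
proof (induction n rule: dec_str.induct)
  case (1 n)
  show ?case
  proof (cases "n < 10")
    case True
    then show ?thesis by (subst dec_str.simps) (simp add: dv_def digit_val)
  next
    case False
    then have "dv (dec_str n) = 10 * dv (dec_str (n div 10)) + n mod 10"
      by (subst dec_str.simps) (simp add: dv_def digit_val)
    then show ?thesis using 1 False by simp
  qed
qed

lemma dec_str_inj: "dec_str a = dec_str b \<Longrightarrow> a = b"
  by (metis dv_dec)

lemma dec_str_len: "2 ^ length (dec_str n) \<le> 2 * n + 2"
proof (induction n rule: dec_str.induct)
  case (1 n)
  show ?case
  proof (cases "n < 10")
    case True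
    then show ?thesis by (subst dec_str.simps) simp
  next
    case False
    then have "2 ^ length (dec_str n) = 2 * 2 ^ length (dec_str (n div 10))"
      by (subst dec_str.simps) simp
    also have "\<dots> \<le> 2 * (2 * (n div 10) + 2)" using 1 False by simp
    also have "\<dots> \<le> 2 * n + 2" using False
      by presburger
    finally show ?thesis .
  qed
qed

definition nm :: "nat \<Rightarrow> vname" where "nm k = ''i'' @ dec_str k"

lemma nm_inj: "nm a = nm b \<longleftrightarrow> a = b"
  unfolding nm_def using dec_str_inj by auto

lemma nm_ne: "nm k \<noteq> ''x''" "nm k \<noteq> ''y''" "nm k \<noteq> ''r''"
  unfolding nm_def using dec_str_ne[of k] by auto

definition A :: stmt where
  "A = Assign ''r'' (Op OAdd [Op OAdd [Var ''r'', Var ''r''], NumC 1])"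

definition B :: "nat \<Rightarrow> stmt" where "B d = Block (replicate d A)"

primrec nest :: "nat \<Rightarrow> stmt \<Rightarrow> stmt" where
  "nest 0 s = s"
| "nest (Suc k) s = For (nm k) (Var ''y'') (nest k s)"

definition prg :: "nat \<Rightarrow> prog" where
  "prg d = Prog [''x''] [Decl IInt ''y'', Assign ''y'' (Var ''x''), Decl TInt ''r'', nest d (B d)] (Var ''r'')"

definition Inv :: "int \<Rightarrow> nat \<Rightarrow> store \<Rightarrow> bool" where
  "Inv v m \<Sigma> \<longleftrightarrow> \<Sigma> ''y'' = Some (IntV v) \<and> \<Sigma> ''r'' = Some (IntV (2 ^ m - 1))"

lemma exec_A: "Inv v m \<Sigma> \<Longrightarrow> \<exists>\<Sigma>'. exec \<Sigma> A \<Sigma>' \<and> Inv v (Suc m) \<Sigma>'"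
proof -
  assume I: "Inv v m \<Sigma>"
  let ?S = "\<Sigma>(''r'' \<mapsto> IntV (2 ^ Suc m - 1))"
  have "exec \<Sigma> A ?S" unfolding A_def
    by (rule ExAssign) (use I in \<open>auto simp: Inv_def int2_def\<close>)
  moreover have "Inv v (Suc m) ?S" using I by (simp add: Inv_def)
  ultimately show ?thesis by blast
qed

lemma execs_rep: "Inv v m \<Sigma> \<Longrightarrow> \<exists>\<Sigma>'. execs \<Sigma> (replicate t A) \<Sigma>' \<and> Inv v (m + t) \<Sigma>'"
proof (induction t arbitrary: m \<Sigma>)
  case 0
  then show ?case by (auto intro: ExsNil)
next
  case (Suc t)
  obtain \<Sigma>1 where 1: "exec \<Sigma> A \<Sigma>1" "Inv v (Suc m) \<Sigma>1" using exec_A[OF Suc.prems] by blast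
  obtain \<Sigma>' where 2: "execs \<Sigma>1 (replicate t A) \<Sigma>'" "Inv v (Suc m + t) \<Sigma>'"
    using Suc.IH[OF 1(2)] by blast
  show ?case using ExsCons[OF 1(1) 2(1)] 2(2) by auto
qed

lemma loop_lem:
  assumes body: "\<And>m \<Sigma>. Inv v m \<Sigma> \<Longrightarrow> \<exists>\<Sigma>'. exec \<Sigma> s \<Sigma>' \<and> Inv v (m + K) \<Sigma>'"
    and xn: "x \<noteq> ''y''" "x \<noteq> ''r''"
  shows "Inv v m \<Sigma> \<Longrightarrow> \<exists>\<Sigma>'. loop x s j (j + int t) \<Sigma> \<Sigma>' \<and> Inv v (m + K * t) \<Sigma>'"
proof (induction t arbitrary: m \<Sigma> j)
  case 0
  then show ?case by (auto intro: LoopEnd)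
next
  case (Suc t)
  have "Inv v m (\<Sigma>(x \<mapsto> IntV j))" using Suc.prems xn by (simp add: Inv_def)
  then obtain \<Sigma>1 where 1: "exec (\<Sigma>(x \<mapsto> IntV j)) s \<Sigma>1" "Inv v (m + K) \<Sigma>1" using body by blast
  obtain \<Sigma>' where 2: "loop x s (j + 1) (j + 1 + int t) \<Sigma>1 \<Sigma>'" "Inv v (m + K + K * t) \<Sigma>'"
    using Suc.IH[OF 1(2)] by blast
  have "j + 1 + int t = j + int (Suc t)" by simp
  then have "loop x s j (j + int (Suc t)) \<Sigma> \<Sigma>'"
    using LoopStep[OF _ 1(1) 2(1)] by (simp add: add.assoc)
  moreover have "m + K + K * t = m + K * Suc t" by simp
  ultimately show ?case using 2(2) by metis
qed

lemma exec_nest: "Inv v m \<Sigma> \<Longrightarrow> \<exists>\<Sigma>'. exec \<Sigma> (nest k (B d)) \<Sigma>' \<and> Inv v (m + d * sz v ^ k) \<Sigma>'"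
proof (induction k arbitrary: m \<Sigma>)
  case 0
  then show ?case using execs_rep[OF 0] by (auto simp: B_def intro: ExBlock)
next
  case (Suc k)
  have ev: "eval \<Sigma> (Op OSize [Var ''y'']) = Some (IntV (int (sz v)))"
    using Suc.prems by (simp add: Inv_def int1_def)
  obtain \<Sigma>' where "loop (nm k) (nest k (B d)) 0 (0 + int (sz v)) \<Sigma> \<Sigma>'"
     "Inv v (m + d * sz v ^ k * sz v) \<Sigma>'"
    using loop_lem[of v "nest k (B d)" "d * sz v ^ k" "nm k" m \<Sigma> 0 "sz v"] Suc nm_ne by blast
  moreover have "m + d * sz v ^ k * sz v = m + d * sz v ^ Suc k" by (simp add: mult_ac)
  ultimately show ?case using ExFor[OF ev] by auto
qed


lemma sz_pow: "sz (2 ^ k - 1) = k"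
proof -
  have "real_of_int \<bar>2 ^ k - 1\<bar> + 1 = 2 ^ k" by simp
  then show ?thesis unfolding sz_def by simp
qed

lemma run_prg: "run (prg d) [v] (2 ^ (d * sz v ^ d) - 1)"
proof -
  let ?S0 = "map_of (zip [''x''] (map IntV [v]))"
  let ?S1 = "?S0(''y'' \<mapsto> default_val IInt)"
  let ?S2 = "?S1(''y'' \<mapsto> IntV v)"
  let ?S3 = "?S2(''r'' \<mapsto> default_val TInt)"
  have e1: "exec ?S0 (Decl IInt ''y'') ?S1" by (rule ExDecl)
  have e2: "exec ?S1 (Assign ''y'' (Var ''x'')) ?S2" by (rule ExAssign) auto
  have e3: "exec ?S2 (Decl TInt ''r'') ?S3" by (rule ExDecl)
  have "Inv v 0 ?S3" by (simp add: Inv_def default_val_def)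
  then obtain S where e4: "exec ?S3 (nest d (B d)) S" and I: "Inv v (0 + d * sz v ^ d) S"
    using exec_nest by blast
  have "execs ?S0 [Decl IInt ''y'', Assign ''y'' (Var ''x''), Decl TInt ''r'', nest d (B d)] S"
    by (intro ExsCons[OF e1] ExsCons[OF e2] ExsCons[OF e3] ExsCons[OF e4] ExsNil)
  then show ?thesis using I unfolding prg_def by (auto simp: Inv_def)
qed


lemma wt_A: "\<Gamma> ''r'' = Some TInt \<Longrightarrow> wtS \<Gamma> l A \<Gamma>"
  unfolding A_def
  by (rule WtAssign[where t = TInt]) (auto simp: arith_ty_def is_int_ty_def ty_sup_def compat_def)

lemma wt_rep: "\<Gamma> ''r'' = Some TInt \<Longrightarrow> wtSs \<Gamma> l (replicate t A) \<Gamma>"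
  by (induction t) (auto intro: WtsNil WtsCons wt_A)

lemma wt_nest: "\<lbrakk> \<Gamma> ''y'' = Some IInt; \<Gamma> ''r'' = Some TInt; \<forall>j<k. nm j \<notin> dom \<Gamma> \<rbrakk>
   \<Longrightarrow> wtS \<Gamma> l (nest k (B d)) \<Gamma>"
proof (induction k arbitrary: \<Gamma> l)
  case 0
  then show ?case unfolding B_def by (auto intro: WtBlock wt_rep)
next
  case (Suc k)
  have "wtS (\<Gamma>(nm k \<mapsto> IInt)) True (nest k (B d)) (\<Gamma>(nm k \<mapsto> IInt))"
    using Suc.prems nm_ne nm_inj by (intro Suc.IH) (auto simp: domIff less_Suc_eq)
  then show ?case using Suc.prems
    by (auto intro!: WtFor)
qed

lemma wt_prg: "well_typed (prg d)"
proof -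
  let ?G0 = "map_of (map (\<lambda>x. (x, TInt)) [''x''])"
  let ?G1 = "?G0(''y'' \<mapsto> IInt)"
  let ?G2 = "?G1(''r'' \<mapsto> TInt)"
  have w1: "wtS ?G0 False (Decl IInt ''y'') ?G1" by (rule WtDecl) auto
  have w2: "wtS ?G1 False (Assign ''y'' (Var ''x'')) ?G1"
    by (rule WtAssign) (auto simp: compat_def is_int_ty_def)
  have w3: "wtS ?G1 False (Decl TInt ''r'') ?G2" by (rule WtDecl) auto
  have w4: "wtS ?G2 False (nest d (B d)) ?G2"
    by (rule wt_nest) (auto simp: nm_ne)
  have "wtSs ?G0 False [Decl IInt ''y'', Assign ''y'' (Var ''x''), Decl TInt ''r'', nest d (B d)] ?G2"
    by (intro WtsCons[OF w1] WtsCons[OF w2] WtsCons[OF w3] WtsCons[OF w4] WtsNil)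
  then show ?thesis unfolding prg_def by (auto simp: is_int_ty_def)
qed


lemma letter_i: "is_letter (CHR ''i'')" by (simp add: is_letter_def)

lemma valid_nm: "valid_ident (nm k)"
proof -
  have D: "set (dec_str k) \<subseteq> set ''0123456789''" by (rule dec_str_digits)
  have L: "\<forall>c\<in>set (nm k). is_letter c \<or> is_digit c"
  proof
    fix c assume "c \<in> set (nm k)"
    then have "c = CHR ''i'' \<or> c \<in> set (dec_str k)" unfolding nm_def by simp
    then show "is_letter c \<or> is_digit c"
    proof
      assume "c \<in> set (dec_str k)"
      then have "c \<in> set ''0123456789''" using D by (rule subsetD[rotated])
      then show ?thesis unfolding is_digit_def by (rule disjI2)
    qed (simp add: letter_i)
  qed
  have R: "nm k \<notin> set reserved_words"
  proof
    assume "nm k \<in> set reserved_words"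
    then have "dec_str k = ''int'' \<or> dec_str k = ''nt'' \<or> dec_str k = ''f''"
      by (simp add: nm_def reserved_words_def)
    moreover have "CHR ''i'' \<notin> set ''0123456789''" "CHR ''n'' \<notin> set ''0123456789''" "CHR ''f'' \<notin> set ''0123456789''" by simp_all
    ultimately show False using D by auto
  qed
  show ?thesis using L R letter_i unfolding valid_ident_def nm_def by simp
qed
lemma idents_nest: "(\<forall>z\<in>set (idents_s s). valid_ident z) \<Longrightarrow> valid_ident ''y''
   \<Longrightarrow> \<forall>z\<in>set (idents_s (nest k s)). valid_ident z"
  by (induction k) (auto simp: valid_nm)

lemma wf_prg: "wf_idents (prg d)"
proof -
  have vr: "valid_ident ''r''" "valid_ident ''x''" "valid_ident ''y''"
    by (simp_all add: valid_ident_def is_letter_def reserved_words_def)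
  have "\<forall>z\<in>set (idents_s (B d)). valid_ident z"
    by (auto simp: B_def A_def vr)
  then have "\<forall>z\<in>set (idents_s (nest d (B d))). valid_ident z"
    using idents_nest vr by blast
  then show ?thesis unfolding wf_idents_def prg_def using vr by auto
qed

lemma len_nest: "length (show_s (nest k s)) = length (show_s s) + (\<Sum>j<k. 14 + length (dec_str j))"
  by (induction k) (auto simp: nm_def)

lemma len_A: "length (show_s A) = 14"
  by (simp add: A_def sep_by_def dec_str.simps)

lemma len_B: "length (show_s (B d)) = 2 + 14 * d"
  by (simp add: B_def length_concat len_A sum_list_replicate)

lemma len_prg: "prog_length (prg d) = 45 + 14 * d + (\<Sum>j<d. 14 + length (dec_str j))"
  by (simp add: prog_length_def prg_def len_nest len_B sep_by_def)


lemma len_dec_bound: "j < d \<Longrightarrow> real (length (dec_str j)) \<le> 1 + log 2 (real d)"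
proof -
  assume jd: "j < d"
  have "2 ^ length (dec_str j) \<le> 2 * d" using dec_str_len[of j] jd by linarith
  then have "real (length (dec_str j)) \<le> log 2 (real (2 * d))" by (rule le_log2_of_power)
  also have "\<dots> = 1 + log 2 (real d)" using jd by (simp add: log_mult)
  finally show ?thesis .
qed

lemma len_bound: "d \<ge> 1 \<Longrightarrow> real (prog_length (prg d)) \<le> 100 * real d * (1 + log 2 (real d))"
proof -
  assume d1: "d \<ge> 1"
  let ?L = "log 2 (real d)"
  have L0: "?L \<ge> 0" using d1 by simp
  have "real (\<Sum>j<d. length (dec_str j)) = (\<Sum>j<d. real (length (dec_str j)))" by simp
  also have "\<dots> \<le> real (card {..<d}) * (1 + ?L)"
    by (rule sum_bounded_above) (simp add: len_dec_bound)
  finally have S: "real (\<Sum>j<d. length (dec_str j)) \<le> real d * (1 + ?L)" by simp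
  have "real (prog_length (prg d)) = 45 + 28 * real d + real (\<Sum>j<d. length (dec_str j))"
    by (simp add: len_prg sum.distrib)
  also have "\<dots> \<le> 45 + 28 * real d + real d * (1 + ?L)" using S by simp
  also have "\<dots> \<le> 100 * real d * (1 + ?L)"
  proof -
    have "real d * ?L \<ge> 0" using L0 by simp
    moreover have "real d \<ge> 1" using d1 by simp
    moreover have "100 * real d * (1 + ?L) = 100 * real d + 100 * (real d * ?L)"
      "real d * (1 + ?L) = real d + real d * ?L" by (simp_all add: algebra_simps)
    ultimately show ?thesis by linarith
  qed
  finally show ?thesis .
qed

theorem lemma8:
  shows "\<exists>C::real. \<forall>d::nat. d \<ge> 1 \<longrightarrow>
           (\<exists>p. wf_idents p \<and> well_typed p \<and> arity p = 1 \<and>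
                real (prog_length p) \<le> C * real d * (1 + log 2 (real d)) \<and>
                (\<forall>v::int. \<exists>r. run p [v] r \<and> sz r = d * sz v ^ d))"
proof (rule exI[of _ 100], intro allI impI)
  fix d :: nat assume d1: "d \<ge> 1"
  show "\<exists>p. wf_idents p \<and> well_typed p \<and> arity p = 1 \<and>
                real (prog_length p) \<le> 100 * real d * (1 + log 2 (real d)) \<and>
                (\<forall>v::int. \<exists>r. run p [v] r \<and> sz r = d * sz v ^ d)"
  proof -
    have "\<forall>v::int. \<exists>r. run (prg d) [v] r \<and> sz r = d * sz v ^ d"
      using run_prg sz_pow by blast
    moreover have "arity (prg d) = 1" by (simp add: prg_def)
    ultimately show ?thesis using wf_prg wt_prg len_bound[OF d1] by blast
  qed
qed

end
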